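(* Let $A$ be a finite nonempty subset of $\mathbb{R}^n$ not containing the origin $O$. Let $A^{\mathcal B} = \{\tau(S) : S \subset A,\ S \neq \varnothing\}$ and let $A^{\mathcal W} = \{\tau(S) : S \subset A,\ S \neq \varnothing,\ S \text{ affinely independent}\}$. Then $A^{\mathcal B} = A^{\mathcal W}$.
   Context: For a finite nonempty set $S \subset \mathbb{R}^n$, $\mathcal{C}(S)$ denotes its convex hull and $\tau(S)$ denotes the unique point of $\mathcal{C}(S)$ of minimal Euclidean norm, i.e. $\|\tau(S)\| = \inf_{x \in \mathcal{C}(S)} \|x\|$. *)

theory Defs
  imports "HOL-Analysis.Analysis"
begin

definition tau :: "'a::euclidean_space set \<Rightarrow> 'a" where
  "tau S = (THE x. x \<in> convex hull S \<and> (\<forall>y \<in> convex hull S. norm x \<le> norm y))"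

end

theory Submission
  imports Defs
begin

lemma tau_eq:
  fixes S :: "'a::euclidean_space set"
  assumes "finite S" "S \<noteq> {}"
  shows "tau S = closest_point (convex hull S) 0"
proof -
  let ?C = "convex hull S"
  have cl: "closed ?C" by (simp add: assms(1) compact_convex_hull finite_imp_compact compact_imp_closed)
  have ne: "?C \<noteq> {}" using assms(2) by simp
  have cv: "convex ?C" by simp
  let ?p = "closest_point ?C 0"
  have p1: "?p \<in> ?C" using closest_point_in_set[OF cl ne] .
  have p2: "\<forall>y\<in>?C. norm ?p \<le> norm y"
    using closest_point_le[OF cl, of _ 0] by simp
  show ?thesis unfolding tau_def
  proof (rule the_equality)
    show "?p \<in> ?C \<and> (\<forall>y\<in>?C. norm ?p \<le> norm y)" using p1 p2 by blast
  next
    fix x assume "x \<in> ?C \<and> (\<forall>y\<in>?C. norm x \<le> norm y)"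
    then show "x = ?p" using closest_point_unique[OF cv cl, of x 0] by (simp add: dist_0_norm)
  qed
qed

lemma tau_char:
  fixes S :: "'a::euclidean_space set"
  assumes "finite S" "S \<noteq> {}"
  shows "tau S \<in> convex hull S" "\<forall>y\<in>convex hull S. norm (tau S) \<le> norm y"
    "\<lbrakk>x \<in> convex hull S; \<forall>y\<in>convex hull S. norm x \<le> norm y\<rbrakk> \<Longrightarrow> x = tau S"
proof -
  let ?C = "convex hull S"
  have cl: "closed ?C" by (simp add: assms(1) compact_convex_hull finite_imp_compact compact_imp_closed)
  have ne: "?C \<noteq> {}" using assms(2) by simp
  show "tau S \<in> ?C" unfolding tau_eq[OF assms] using closest_point_in_set[OF cl ne] .
  show "\<forall>y\<in>?C. norm (tau S) \<le> norm y" unfolding tau_eq[OF assms]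
    using closest_point_le[OF cl, of _ 0] by simp
  show "\<lbrakk>x \<in> convex hull S; \<forall>y\<in>convex hull S. norm x \<le> norm y\<rbrakk> \<Longrightarrow> x = tau S"
    unfolding tau_eq[OF assms] using closest_point_unique[OF convex_convex_hull cl, of x 0]
    by (simp add: dist_0_norm)
qed

lemma indep_sub:
  fixes S :: "'a::euclidean_space set"
  assumes "finite S" "x \<in> convex hull S"
  shows "\<exists>T. T \<subseteq> S \<and> \<not> affine_dependent T \<and> x \<in> convex hull T"
proof -
  let ?P = "\<lambda>n. \<exists>T. T \<subseteq> S \<and> card T = n \<and> x \<in> convex hull T"
  have "?P (card S)" using assms by blast
  define n where "n = (LEAST m. ?P m)"
  have Pn: "?P n" unfolding n_def by (rule LeastI, fact)
  have mn: "\<And>m. ?P m \<Longrightarrow> n \<le> m" unfolding n_def by (rule Least_le)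
  from Pn obtain T where T: "T \<subseteq> S" "card T = n" "x \<in> convex hull T" by blast
  have fT: "finite T" using T(1) assms(1) finite_subset by blast
  obtain T' where T': "finite T'" "T' \<subseteq> T" "card T' \<le> aff_dim T + 1" "x \<in> convex hull T'"
    using T(3) caratheodory_aff_dim[of T] by blast
  have "n \<le> card T'" using mn T' T(1) by blast
  then have "int (card T) \<le> aff_dim T + 1" using T'(3) T(2) by linarith
  moreover have "aff_dim T \<le> int (card T) - 1" using aff_dim_le_card[OF fT] by simp
  ultimately have "aff_dim T = int (card T) - 1" by linarith
  then have "\<not> affine_dependent T" using affine_independent_iff_card fT by blast
  then show ?thesis using T by blast
qed

theorem lemma1:
  fixes A :: "'a::euclidean_space set"
  assumes "finite A" and "A \<noteq> {}" and "0 \<notin> A"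
  shows "{tau S | S. S \<subseteq> A \<and> S \<noteq> {}}
       = {tau S | S. S \<subseteq> A \<and> S \<noteq> {} \<and> \<not> affine_dependent S}"
proof
  show "{tau S | S. S \<subseteq> A \<and> S \<noteq> {}} \<subseteq> {tau S | S. S \<subseteq> A \<and> S \<noteq> {} \<and> \<not> affine_dependent S}"
  proof
    fix z assume "z \<in> {tau S | S. S \<subseteq> A \<and> S \<noteq> {}}"
    then obtain S where S: "S \<subseteq> A" "S \<noteq> {}" "z = tau S" by blast
    have fS: "finite S" using S(1) assms(1) finite_subset by blast
    have zin: "z \<in> convex hull S" using tau_char(1)[OF fS S(2)] S(3) by simp
    obtain T where T: "T \<subseteq> S" "\<not> affine_dependent T" "z \<in> convex hull T"
      using indep_sub[OF fS zin] by blast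
    have fT: "finite T" using T(1) fS finite_subset by blast
    have Tne: "T \<noteq> {}" using T(3) by auto
    have sub: "convex hull T \<subseteq> convex hull S" using T(1) hull_mono by blast
    have "\<forall>y\<in>convex hull T. norm z \<le> norm y"
      using tau_char(2)[OF fS S(2)] S(3) sub by blast
    then have "z = tau T" using tau_char(3)[OF fT Tne T(3)] by blast
    then show "z \<in> {tau S | S. S \<subseteq> A \<and> S \<noteq> {} \<and> \<not> affine_dependent S}"
      using T S Tne by blast
  qed
next
  show "{tau S | S. S \<subseteq> A \<and> S \<noteq> {} \<and> \<not> affine_dependent S} \<subseteq> {tau S | S. S \<subseteq> A \<and> S \<noteq> {}}"
    by blast
qed

end
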